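(* Let $\rho_z$ and $\rho_{z'}$ be the discounted state occupation measures of a fixed policy from initial states $z,z'\in\mathcal{S}$, let $R:\mathcal{S}\to\mathbb{R}^d$ be a bounded measurable function, and set $H=\big\|\int R(s)\,\rho_z(ds)\big\|$. Then \[ q:=\int\!\!\int R(s)^\top R(s')\,\rho_z(ds)\,\rho_{z'}(ds') \;\ge\; H\Big(H-2\,\|R\|_{\infty,2}\,\|\Delta_{z',z}\|_{\mathrm{TV}}\Big). \]
   Context: For a Markov decision process with state space $\mathcal{S}$, policy $\pi$, and discount factor $\gamma\in(0,1)$, the discounted state occupation measure from $z$ is $\rho_z(\cdot)=(1-\gamma)\sum_{t\ge0}\gamma^t\,\mathbb{P}(s_t\in\cdot\mid s_0=z,\pi)$ (a probability measure on $\mathcal{S}$). $\Delta_{z',z}=\rho_{z'}-\rho_z$ is a signed measure and $\|\Delta_{z',z}\|_{\mathrm{TV}}=\sup_B|\Delta_{z',z}(B)|$ is its total variation norm. $\|\cdot\|$ is the Euclidean norm, and $\|R\|_{\infty,2}=\sqrt{\sum_{i=1}^d\big(\sup_{s\in\mathcal{S}}|[R(s)]_i|\big)^2}$. *)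

theory Defs
  imports "HOL-Probability.Probability"
begin

text \<open>State space: measurable space M. The fixed policy pi together with the MDP
transition law induces a Markov kernel K on the states:
K s = distribution of s_{t+1} given s_t = s under pi.\<close>

fun state_dist :: "'s measure \<Rightarrow> ('s \<Rightarrow> 's measure) \<Rightarrow> nat \<Rightarrow> 's \<Rightarrow> 's measure" where
  "state_dist M K 0 z = return M z"
| "state_dist M K (Suc t) z = bind (state_dist M K t z) K"

definition occupation :: "'s measure \<Rightarrow> ('s \<Rightarrow> 's measure) \<Rightarrow> real \<Rightarrow> 's \<Rightarrow> 's measure" where
  "occupation M K \<gamma> z = measure_of (space M) (sets M)
     (\<lambda>B. ennreal (1 - \<gamma>) * (\<Sum>t. ennreal (\<gamma> ^ t) * emeasure (state_dist M K t z) B))"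

definition tv_dist :: "'s measure \<Rightarrow> 's measure \<Rightarrow> real" where
  "tv_dist \<mu>' \<mu> = (SUP B\<in>sets \<mu>. \<bar>measure \<mu>' B - measure \<mu> B\<bar>)"

definition sup2_norm :: "'s measure \<Rightarrow> ('s \<Rightarrow> real ^ 'd) \<Rightarrow> real" where
  "sup2_norm M R = sqrt (\<Sum>i\<in>UNIV. (SUP s\<in>space M. \<bar>R s $ i\<bar>)\<^sup>2)"

end

theory Submission
  imports Defs
begin

lemma dens_mono:
  fixes f :: "'a \<Rightarrow> ennreal"
  assumes sQ: "sets Q = sets P" and S: "S \<in> sets P"
    and le: "\<forall>X\<in>sets P. X \<subseteq> S \<longrightarrow> emeasure Q X \<le> emeasure P X"
    and f: "f \<in> borel_measurable P"
  shows "(\<integral>\<^sup>+x. indicator S x * f x \<partial>Q) \<le> (\<integral>\<^sup>+x. indicator S x * f x \<partial>P)"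
proof -
  have spQ: "space Q = space P" using sQ by (rule sets_eq_imp_space_eq)
  have fQ: "f \<in> borel_measurable Q" by (subst measurable_cong_sets[OF sQ refl]) (rule f)
  have SQ: "S \<in> sets Q" using S sQ by simp
  have "density Q (indicator S) \<le> density P (indicator S)"
  proof -
    have "emeasure (density Q (indicator S)) A \<le> emeasure (density P (indicator S)) A" for A
    proof (cases "A \<in> sets P")
      case True
      then show ?thesis using emeasure_restricted[OF SQ, of A] emeasure_restricted[OF S True] le
        sQ S True by (simp add: Int_absorb1 sets.Int)
    next
      case False
      then show ?thesis using sQ by (simp add: emeasure_notin_sets)
    qed
    then show ?thesis using spQ sQ by (simp add: le_measure_iff le_fun_def)
  qed
  then have "integral\<^sup>N (density Q (indicator S)) f \<le> integral\<^sup>N (density P (indicator S)) f"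
    by (intro nn_integral_mono_measure) (simp add: sQ)
  then show ?thesis
    using nn_integral_density[of "indicator S" Q f] nn_integral_density[of "indicator S" P f] fQ f S SQ
    by simp
qed

lemma tv_one_sided:
  fixes g :: "'a \<Rightarrow> real"
  assumes P: "prob_space P" and Q: "prob_space Q" and sQ: "sets Q = sets P"
    and g: "g \<in> borel_measurable P" and gb: "\<And>x. x \<in> space P \<Longrightarrow> 0 \<le> g x \<and> g x \<le> D"
  shows "(\<integral>x. g x \<partial>Q) - (\<integral>x. g x \<partial>P) \<le> D * tv_dist Q P"
proof -
  interpret P: prob_space P by fact
  interpret Q: prob_space Q by fact
  have spQ: "space Q = space P" using sQ by (rule sets_eq_imp_space_eq)
  have gQ: "g \<in> borel_measurable Q" by (subst measurable_cong_sets[OF sQ refl]) (rule g)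
  obtain Y where Y: "Y \<in> sets P" and Y1: "\<forall>X\<in>sets P. X \<subseteq> Y \<longrightarrow> emeasure Q X \<le> emeasure P X"
    and Y2: "\<forall>X\<in>sets P. X \<inter> Y = {} \<longrightarrow> emeasure P X \<le> emeasure Q X"
    using finite_unsigned_Hahn_decomposition[of P Q] P.finite_measure_axioms Q.finite_measure_axioms sQ
    by blast
  define Z where "Z = space P - Y"
  have Z: "Z \<in> sets P" unfolding Z_def using Y by auto
  have Z2: "\<forall>X\<in>sets P. X \<subseteq> Z \<longrightarrow> emeasure P X \<le> emeasure Q X" using Y2 unfolding Z_def by auto
  have D0: "0 \<le> D" using gb P.not_empty by fastforce
  define h1 where "h1 x = indicator Y x * g x" for x
  define h2 where "h2 x = indicator Z x * (D - g x)" for x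
  have h1m: "h1 \<in> borel_measurable P" unfolding h1_def using g Y by measurable
  have h2m: "h2 \<in> borel_measurable P" unfolding h2_def using g Z by measurable
  have h1Q: "h1 \<in> borel_measurable Q" by (subst measurable_cong_sets[OF sQ refl]) (rule h1m)
  have h2Q: "h2 \<in> borel_measurable Q" by (subst measurable_cong_sets[OF sQ refl]) (rule h2m)
  have h1b: "0 \<le> h1 x \<and> h1 x \<le> D" if "x \<in> space P" for x
    using gb[OF that] D0 by (auto simp: h1_def indicator_def)
  have h2b: "0 \<le> h2 x \<and> h2 x \<le> D" if "x \<in> space P" for x
    using gb[OF that] D0 by (auto simp: h2_def indicator_def)
  have i1P: "integrable P h1" using h1b h1m by (intro P.integrable_const_bound[of _ D]) auto
  have i1Q: "integrable Q h1" using h1b h1Q spQ by (intro Q.integrable_const_bound[of _ D]) auto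
  have i2P: "integrable P h2" using h2b h2m by (intro P.integrable_const_bound[of _ D]) auto
  have i2Q: "integrable Q h2" using h2b h2Q spQ by (intro Q.integrable_const_bound[of _ D]) auto
  have e1: "(\<integral>\<^sup>+x. ennreal (h1 x) \<partial>Q) \<le> (\<integral>\<^sup>+x. ennreal (h1 x) \<partial>P)"
  proof -
    have "(\<integral>\<^sup>+x. indicator Y x * ennreal (g x) \<partial>Q) \<le> (\<integral>\<^sup>+x. indicator Y x * ennreal (g x) \<partial>P)"
      using g by (intro dens_mono[OF sQ Y Y1]) measurable
    moreover have "\<And>x. ennreal (h1 x) = indicator Y x * ennreal (g x)"
      by (simp add: h1_def indicator_def)
    ultimately show ?thesis by simp
  qed
  have e2: "(\<integral>\<^sup>+x. ennreal (h2 x) \<partial>P) \<le> (\<integral>\<^sup>+x. ennreal (h2 x) \<partial>Q)"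
  proof -
    have "(\<integral>\<^sup>+x. indicator Z x * ennreal (D - g x) \<partial>P) \<le> (\<integral>\<^sup>+x. indicator Z x * ennreal (D - g x) \<partial>Q)"
      using g by (intro dens_mono[OF sQ[symmetric] _ Z2[folded sQ]]) (use Z sQ in auto)
    moreover have "\<And>x. ennreal (h2 x) = indicator Z x * ennreal (D - g x)"
      by (simp add: h2_def indicator_def)
    ultimately show ?thesis by simp
  qed
  have a1Q: "AE x in Q. 0 \<le> h1 x" using h1b spQ by (intro AE_I2) auto
  have a1P: "AE x in P. 0 \<le> h1 x" using h1b by (intro AE_I2) auto
  have a2Q: "AE x in Q. 0 \<le> h2 x" using h2b spQ by (intro AE_I2) auto
  have a2P: "AE x in P. 0 \<le> h2 x" using h2b by (intro AE_I2) auto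
  have r1: "(\<integral>x. h1 x \<partial>Q) \<le> (\<integral>x. h1 x \<partial>P)"
  proof -
    have "ennreal (\<integral>x. h1 x \<partial>Q) \<le> ennreal (\<integral>x. h1 x \<partial>P)"
      using e1 nn_integral_eq_integral[OF i1Q a1Q] nn_integral_eq_integral[OF i1P a1P] by simp
    then show ?thesis using integral_nonneg_AE[OF a1P] by (simp add: ennreal_le_iff)
  qed
  have r2: "(\<integral>x. h2 x \<partial>P) \<le> (\<integral>x. h2 x \<partial>Q)"
  proof -
    have "ennreal (\<integral>x. h2 x \<partial>P) \<le> ennreal (\<integral>x. h2 x \<partial>Q)"
      using e2 nn_integral_eq_integral[OF i2Q a2Q] nn_integral_eq_integral[OF i2P a2P] by simp
    then show ?thesis using integral_nonneg_AE[OF a2Q] by (simp add: ennreal_le_iff)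
  qed
  have decomp: "\<And>N. prob_space N \<Longrightarrow> space N = space P \<Longrightarrow> sets N = sets P \<Longrightarrow> integrable N h1 \<Longrightarrow> integrable N h2 \<Longrightarrow>
      (\<integral>x. g x \<partial>N) = (\<integral>x. h1 x \<partial>N) + D * measure N Z - (\<integral>x. h2 x \<partial>N)"
  proof -
    fix N assume N: "prob_space N" "space N = space P" "sets N = sets P" "integrable N h1" "integrable N h2"
    interpret N: prob_space N by fact
    have "(\<integral>x. g x \<partial>N) = (\<integral>x. h1 x + D * indicator Z x - h2 x \<partial>N)"
      using N(2) Y[THEN sets.sets_into_space] by (intro Bochner_Integration.integral_cong) (auto simp: h1_def h2_def Z_def indicator_def)
    also have "\<dots> = (\<integral>x. h1 x \<partial>N) + D * measure N Z - (\<integral>x. h2 x \<partial>N)"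
    proof -
      have ZN: "Z \<in> sets N" using N(3) Z by simp
      have iZ: "integrable N (\<lambda>x. D * indicator Z x)"
        using ZN by (intro integrable_mult_right integrable_real_indicator) (auto simp: N.emeasure_eq_measure)
      have iS: "integrable N (\<lambda>x. h1 x + D * indicator Z x)" using N(4) iZ by (rule Bochner_Integration.integrable_add)
      show ?thesis
        using N ZN iZ iS
        by (simp add: Bochner_Integration.integral_diff Bochner_Integration.integral_add Int_absorb2 sets.sets_into_space)
    qed
    finally show "(\<integral>x. g x \<partial>N) = (\<integral>x. h1 x \<partial>N) + D * measure N Z - (\<integral>x. h2 x \<partial>N)" .
  qed
  have dQ: "(\<integral>x. g x \<partial>Q) = (\<integral>x. h1 x \<partial>Q) + D * measure Q Z - (\<integral>x. h2 x \<partial>Q)"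
    using decomp[OF Q spQ sQ i1Q i2Q] .
  have dP: "(\<integral>x. g x \<partial>P) = (\<integral>x. h1 x \<partial>P) + D * measure P Z - (\<integral>x. h2 x \<partial>P)"
    using decomp[OF P refl refl i1P i2P] .
  have bdd: "bdd_above ((\<lambda>B. \<bar>measure Q B - measure P B\<bar>) ` sets Q)"
  proof (rule bdd_aboveI[where M=1])
    fix x assume "x \<in> (\<lambda>B. \<bar>measure Q B - measure P B\<bar>) ` sets Q"
    then obtain B where xB: "x = \<bar>measure Q B - measure P B\<bar>" by auto
    have a: "measure Q B \<le> 1" by (rule Q.prob_le_1)
    have b: "measure P B \<le> 1" by (rule P.prob_le_1)
    have c: "0 \<le> measure Q B" "0 \<le> measure P B" by (rule measure_nonneg)+
    show "x \<le> 1" unfolding xB using a b c by (smt (verit))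
  qed
  have ZQ: "Z \<in> sets Q" using Z sQ by simp
  have "measure Q Z - measure P Z \<le> \<bar>measure Q Z - measure P Z\<bar>" by (rule abs_ge_self)
  also have "\<dots> \<le> tv_dist Q P"
    unfolding tv_dist_def using bdd unfolding sQ by (rule cSUP_upper[OF Z])
  finally have "measure Q Z - measure P Z \<le> tv_dist Q P" .
  then have "D * (measure Q Z - measure P Z) \<le> D * tv_dist Q P" using D0 by (rule mult_left_mono)
  then show ?thesis unfolding dQ dP using r1 r2 by (simp add: right_diff_distrib)
qed

lemma state_dist_in:
  assumes K: "K \<in> M \<rightarrow>\<^sub>M prob_algebra M" and z: "z \<in> space M"
  shows "state_dist M K t z \<in> space (prob_algebra M)"
proof (induction t)
  case 0
  then show ?case using z by (simp add: space_prob_algebra prob_space_return)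
next
  case (Suc t)
  then show ?case using prob_space_bind'[OF Suc K] sets_bind'[OF Suc K]
    by (simp add: space_prob_algebra)
qed

lemma occupation_eq:
  assumes g0: "0 < \<gamma>" and g1: "\<gamma> < 1"
    and K: "K \<in> M \<rightarrow>\<^sub>M prob_algebra M" and z: "z \<in> space M"
  shows "occupation M K \<gamma> z = measure_pmf (geometric_pmf (1-\<gamma>)) \<bind> (\<lambda>t. state_dist M K t z)"
proof -
  let ?G = "measure_pmf (geometric_pmf (1-\<gamma>))"
  let ?N = "?G \<bind> (\<lambda>t. state_dist M K t z)"
  have A: "?G \<in> space (prob_algebra ?G)" by (simp add: space_prob_algebra measure_pmf.prob_space_axioms)
  have B: "(\<lambda>t. state_dist M K t z) \<in> ?G \<rightarrow>\<^sub>M prob_algebra M"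
    using state_dist_in[OF K z] by simp
  have sN: "sets ?N = sets M" by (rule sets_bind'[OF A B])
  have spN: "space ?N = space M" using sN by (rule sets_eq_imp_space_eq)
  have em: "emeasure ?N X = ennreal (1 - \<gamma>) * (\<Sum>t. ennreal (\<gamma> ^ t) * emeasure (state_dist M K t z) X)"
    if X: "X \<in> sets M" for X
  proof -
    have "emeasure ?N X = (\<integral>\<^sup>+t. emeasure (state_dist M K t z) X \<partial>?G)"
      by (rule emeasure_bind_prob_algebra[OF A B X])
    also have "\<dots> = (\<Sum>t. ennreal (pmf (geometric_pmf (1-\<gamma>)) t) * emeasure (state_dist M K t z) X)"
      by (simp add: nn_integral_measure_pmf nn_integral_count_space_nat)
    also have "\<dots> = (\<Sum>t. ennreal (1 - \<gamma>) * (ennreal (\<gamma> ^ t) * emeasure (state_dist M K t z) X))"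
      using g0 g1 by (simp add: ennreal_mult mult.commute mult.left_commute)
    also have "\<dots> = ennreal (1 - \<gamma>) * (\<Sum>t. ennreal (\<gamma> ^ t) * emeasure (state_dist M K t z) X)"
      by (rule ennreal_suminf_cmult)
    finally show ?thesis .
  qed
  have "occupation M K \<gamma> z = measure_of (space M) (sets M) (emeasure ?N)"
    unfolding occupation_def
    by (rule measure_of_eq) (auto simp: sets.sigma_sets_eq em sets.space_closed)
  also have "\<dots> = ?N" using measure_of_of_measure[of ?N] sN spN by simp
  finally show ?thesis .
qed

lemma occupation_prob:
  assumes g0: "0 < \<gamma>" and g1: "\<gamma> < 1"
    and K: "K \<in> M \<rightarrow>\<^sub>M prob_algebra M" and z: "z \<in> space M"
  shows "prob_space (occupation M K \<gamma> z) \<and> sets (occupation M K \<gamma> z) = sets M"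
proof -
  let ?G = "measure_pmf (geometric_pmf (1-\<gamma>))"
  have A: "?G \<in> space (prob_algebra ?G)" by (simp add: space_prob_algebra measure_pmf.prob_space_axioms)
  have B: "(\<lambda>t. state_dist M K t z) \<in> ?G \<rightarrow>\<^sub>M prob_algebra M"
    using state_dist_in[OF K z] by simp
  show ?thesis unfolding occupation_eq[OF assms] using prob_space_bind'[OF A B] sets_bind'[OF A B] by simp
qed

lemma tv_two_sided:
  fixes g :: "'a \<Rightarrow> real"
  assumes P: "prob_space P" and Q: "prob_space Q" and sQ: "sets Q = sets P"
    and g: "g \<in> borel_measurable P" and gb: "\<And>x. x \<in> space P \<Longrightarrow> \<bar>g x\<bar> \<le> c"
  shows "\<bar>(\<integral>x. g x \<partial>Q) - (\<integral>x. g x \<partial>P)\<bar> \<le> 2 * c * tv_dist Q P"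
proof -
  interpret P: prob_space P by fact
  interpret Q: prob_space Q by fact
  have spQ: "space Q = space P" using sQ by (rule sets_eq_imp_space_eq)
  have gQ: "g \<in> borel_measurable Q" by (subst measurable_cong_sets[OF sQ refl]) (rule g)
  have iP: "integrable P g" using gb g by (intro P.integrable_const_bound[of _ c]) auto
  have iQ: "integrable Q g" using gb gQ spQ by (intro Q.integrable_const_bound[of _ c]) auto
  have hm: "(\<lambda>x. g x + c) \<in> borel_measurable P" using g by measurable
  have hmQ: "(\<lambda>x. g x + c) \<in> borel_measurable Q" using gQ by measurable
  have hb: "0 \<le> g x + c \<and> g x + c \<le> 2 * c" if "x \<in> space P" for x using gb[OF that] by (smt (verit))
  have hbQ: "\<And>x. x \<in> space Q \<Longrightarrow> 0 \<le> g x + c \<and> g x + c \<le> 2 * c" using hb spQ by auto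
  have intP: "(\<integral>x. g x + c \<partial>P) = (\<integral>x. g x \<partial>P) + c" using iP by (simp add: P.prob_space)
  have intQ: "(\<integral>x. g x + c \<partial>Q) = (\<integral>x. g x \<partial>Q) + c" using iQ by (simp add: Q.prob_space)
  have 1: "(\<integral>x. g x + c \<partial>Q) - (\<integral>x. g x + c \<partial>P) \<le> 2 * c * tv_dist Q P"
    by (rule tv_one_sided[OF P Q sQ hm hb])
  have 2: "(\<integral>x. g x + c \<partial>P) - (\<integral>x. g x + c \<partial>Q) \<le> 2 * c * tv_dist P Q"
    by (rule tv_one_sided[OF Q P sQ[symmetric] hmQ hbQ])
  have "tv_dist P Q = tv_dist Q P" unfolding tv_dist_def sQ by (simp add: abs_minus_commute)
  then show ?thesis using 1 2 intP intQ by (simp add: abs_le_iff)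
qed

theorem lemma1:
  fixes M :: "'s measure" and K :: "'s \<Rightarrow> 's measure" and \<gamma> :: real
    and z z' :: 's and R :: "'s \<Rightarrow> real ^ 'd"
  assumes "0 < \<gamma>" and "\<gamma> < 1"
    and "K \<in> measurable M (prob_algebra M)"
    and "z \<in> space M" and "z' \<in> space M"
    and "R \<in> borel_measurable M"
    and "\<exists>C. \<forall>s\<in>space M. norm (R s) \<le> C"
  shows "let \<rho> = occupation M K \<gamma> z; \<rho>' = occupation M K \<gamma> z';
             H = norm (LINT s|\<rho>. R s);
             q = (LINT s'|\<rho>'. (LINT s|\<rho>. R s \<bullet> R s'))
         in q \<ge> H * (H - 2 * sup2_norm M R * tv_dist \<rho>' \<rho>)"
proof -
  obtain C where C: "\<And>s. s \<in> space M \<Longrightarrow> norm (R s) \<le> C" using assms(7) by blast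
  define \<rho> where "\<rho> = occupation M K \<gamma> z"
  define \<rho>' where "\<rho>' = occupation M K \<gamma> z'"
  have p1: "prob_space \<rho>" and s1: "sets \<rho> = sets M"
    using occupation_prob[OF assms(1,2,3,4)] unfolding \<rho>_def by auto
  have p2: "prob_space \<rho>'" and s2: "sets \<rho>' = sets M"
    using occupation_prob[OF assms(1,2,3,5)] unfolding \<rho>'_def by auto
  interpret r1: prob_space \<rho> by fact
  interpret r2: prob_space \<rho>' by fact
  have sp1: "space \<rho> = space M" using s1 by (rule sets_eq_imp_space_eq)
  have sp2: "space \<rho>' = space M" using s2 by (rule sets_eq_imp_space_eq)
  have R1: "R \<in> borel_measurable \<rho>" by (subst measurable_cong_sets[OF s1 refl]) (rule assms(6))
  have R2: "R \<in> borel_measurable \<rho>'" by (subst measurable_cong_sets[OF s2 refl]) (rule assms(6))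
  have i1: "integrable \<rho> R" using C R1 sp1 by (intro r1.integrable_const_bound[of _ C]) auto
  have i2: "integrable \<rho>' R" using C R2 sp2 by (intro r2.integrable_const_bound[of _ C]) auto
  define m where "m = (\<integral>s. R s \<partial>\<rho>)"
  define m' where "m' = (\<integral>s. R s \<partial>\<rho>')"
  define T where "T = tv_dist \<rho>' \<rho>"
  define c where "c i = (SUP s\<in>space M. \<bar>R s $ i\<bar>)" for i
  have bddc: "bdd_above ((\<lambda>s. \<bar>R s $ i\<bar>) ` space M)" for i
    using C by (intro bdd_aboveI[where M=C]) (auto intro: order_trans[OF component_le_norm_cart])
  have cb: "\<bar>R s $ i\<bar> \<le> c i" if "s \<in> space M" for s i
    unfolding c_def using bddc that by (rule cSUP_upper2) simp
  have c0: "0 \<le> c i" for i using cb[OF assms(4), of i] by linarith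
  have q: "(\<integral>s'. (\<integral>s. R s \<bullet> R s' \<partial>\<rho>) \<partial>\<rho>') = m \<bullet> m'"
    unfolding m_def m'_def using i1 i2 by simp
  have comp: "\<bar>m' $ i - m $ i\<bar> \<le> 2 * c i * T" for i
  proof -
    have gm: "(\<lambda>s. R s $ i) \<in> borel_measurable \<rho>"
      using measurable_compose[OF R1 borel_measurable_continuous_onI[OF linear_continuous_on[OF bounded_linear_vec_nth[of i]]]] by simp
    have e1: "m $ i = (\<integral>s. R s $ i \<partial>\<rho>)" unfolding m_def
      using integral_bounded_linear[OF bounded_linear_vec_nth i1, of i] by simp
    have e2: "m' $ i = (\<integral>s. R s $ i \<partial>\<rho>')" unfolding m'_def
      using integral_bounded_linear[OF bounded_linear_vec_nth i2, of i] by simp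
    show ?thesis unfolding e1 e2 T_def
      by (rule tv_two_sided[OF p1 p2 s2[folded s1] gm]) (use cb sp1 in auto)
  qed
  have T0: "0 \<le> T"
  proof -
    have "\<bar>(\<integral>x. 0 \<partial>\<rho>') - (\<integral>x. 0 \<partial>\<rho>)\<bar> \<le> 2 * 1 * tv_dist \<rho>' \<rho>"
      by (rule tv_two_sided[OF p1 p2 s2[folded s1]]) auto
    then show ?thesis unfolding T_def by simp
  qed
  have nd: "norm (m' - m) \<le> 2 * T * sup2_norm M R"
  proof -
    have "norm (m' - m) \<le> norm ((2 * T) *\<^sub>R (\<chi> i. c i))"
    proof (rule norm_le_componentwise_cart)
      fix i
      have "norm ((m' - m) $ i) = \<bar>m' $ i - m $ i\<bar>" by simp
      also have "\<dots> \<le> 2 * c i * T" by (rule comp)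
      also have "\<dots> = norm (((2 * T) *\<^sub>R (\<chi> i. c i)) $ i)"
      proof -
        have "((2 * T) *\<^sub>R (\<chi> i. c i)) $ i = 2 * T * c i" by simp
        moreover have "0 \<le> 2 * T * c i" using T0 c0[of i] by simp
        ultimately show ?thesis by (simp add: mult_ac)
      qed
      finally show "norm ((m' - m) $ i) \<le> norm (((2 * T) *\<^sub>R (\<chi> i. c i)) $ i)" .
    qed
    also have "\<dots> = 2 * T * norm (\<chi> i. c i)" using T0 by simp
    also have "norm (\<chi> i. c i) = sup2_norm M R"
      unfolding norm_vec_def sup2_norm_def L2_set_def c_def by simp
    finally show ?thesis .
  qed
  define H where "H = norm m"
  have H0: "0 \<le> H" unfolding H_def by simp
  have "m \<bullet> m' = H * H + m \<bullet> (m' - m)" unfolding H_def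
    by (simp add: inner_diff_right power2_eq_square[symmetric] power2_norm_eq_inner)
  moreover have "- (H * norm (m' - m)) \<le> m \<bullet> (m' - m)"
    using Cauchy_Schwarz_ineq2[of m "m' - m"] unfolding H_def by linarith
  moreover have "H * norm (m' - m) \<le> H * (2 * T * sup2_norm M R)" using nd H0 by (rule mult_left_mono)
  ultimately have "H * (H - 2 * sup2_norm M R * T) \<le> m \<bullet> m'" by (simp add: algebra_simps)
  then show ?thesis
    unfolding Let_def \<rho>_def[symmetric] \<rho>'_def[symmetric] q m_def[symmetric] m'_def[symmetric] T_def[symmetric] H_def[symmetric] .
qed

end
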